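(* Let $\alpha,\beta>0$, let $n\ge 1$ be an integer, and let $f\in\mathcal{H}_\alpha(M)$ and $V\in\mathcal{H}_\beta(M)$. For $0\le i\le n-1$ set $W_i=V(\tfrac{i}{n})+V(\tfrac{i+1}{n})$ and $\delta_i=f(\tfrac{i+1}{n})-f(\tfrac{i}{n})$, let $\bar W_n=\frac1n\sum_{i=0}^{n-1}W_i$, $\overline{\delta^2_n}=\frac1n\sum_{i=0}^{n-1}\delta_i^2$, and $$T=\frac1n\sum_{i=0}^{n-1}\left(W_i+\delta_i^2-\bar W_n-\overline{\delta^2_n}\right)^2 .$$ Then, with $\bar V=\int_0^1V(x)\,dx$ and $\mathbf 1$ the constant function equal to one on $[0,1]$, $$\|V-\bar V\mathbf 1\|_2^2\lesssim T+n^{-2(\beta\wedge 1)}+n^{-4(\alpha\wedge1)},$$ where the implicit constant does not depend on $n$, $f$ or $V$.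
   Context: For $\alpha,M>0$, the Hölder class $\mathcal{H}_\alpha(M)$ is the set of functions $g:[0,1]\to\mathbb{R}$ such that $|g^{(\lfloor\alpha\rfloor)}(x)-g^{(\lfloor\alpha\rfloor)}(y)|\le M|x-y|^{\alpha-\lfloor\alpha\rfloor}$ for all $x,y\in[0,1]$ and $\|g^{(k)}\|_\infty\le M$ for all $k\in\{0,\dots,\lfloor\alpha\rfloor\}$. $M$ is a fixed, sufficiently large constant. $a\lesssim b$ means $a\le Cb$ for a constant $C$ which may depend on $\alpha,\beta,M$ only. $\|\cdot\|_2$ is the $L^2([0,1])$ norm; $a\wedge b=\min\{a,b\}$. *)

theory Defs
  imports "HOL-Analysis.Analysis"
begin

definition holder :: "real \<Rightarrow> real \<Rightarrow> (real \<Rightarrow> real) set" where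
  "holder \<alpha> M = {g. \<exists>D :: nat \<Rightarrow> real \<Rightarrow> real.
      (\<forall>x\<in>{0..1}. D 0 x = g x) \<and>
      (\<forall>j < nat \<lfloor>\<alpha>\<rfloor>. \<forall>x\<in>{0..1}.
          (D j has_real_derivative D (Suc j) x) (at x within {0..1})) \<and>
      (\<forall>j \<le> nat \<lfloor>\<alpha>\<rfloor>. \<forall>x\<in>{0..1}. \<bar>D j x\<bar> \<le> M) \<and>
      (\<forall>x\<in>{0..1}. \<forall>y\<in>{0..1}.
          \<bar>D (nat \<lfloor>\<alpha>\<rfloor>) x - D (nat \<lfloor>\<alpha>\<rfloor>) y\<bar> \<le> M * \<bar>x - y\<bar> powr (\<alpha> - of_int \<lfloor>\<alpha>\<rfloor>))}"

end

theory Submission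
  imports Defs
begin

lemma holder_bound:
  assumes g: "g \<in> holder \<gamma> M" and "\<gamma> > 0" and x: "x \<in> {0..1}" and y: "y \<in> {0..1}"
  shows "\<bar>g x - g y\<bar> \<le> M * \<bar>x - y\<bar> powr min \<gamma> 1"
proof -
  obtain D where D0: "\<forall>x\<in>{0..1}. D 0 x = g x"
    and Dd: "\<forall>j < nat \<lfloor>\<gamma>\<rfloor>. \<forall>x\<in>{0..1}. (D j has_real_derivative D (Suc j) x) (at x within {0..1})"
    and Db: "\<forall>j \<le> nat \<lfloor>\<gamma>\<rfloor>. \<forall>x\<in>{0..1}. \<bar>D j x\<bar> \<le> M"
    and Dh: "\<forall>x\<in>{0..1}. \<forall>y\<in>{0..1}. \<bar>D (nat \<lfloor>\<gamma>\<rfloor>) x - D (nat \<lfloor>\<gamma>\<rfloor>) y\<bar> \<le> M * \<bar>x - y\<bar> powr (\<gamma> - of_int \<lfloor>\<gamma>\<rfloor>)"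
    using g unfolding holder_def by blast
  show ?thesis
  proof (cases "\<gamma> < 1")
    case True
    then have f0: "\<lfloor>\<gamma>\<rfloor> = 0" using assms(2) by linarith
    have "min \<gamma> 1 = \<gamma>" using True by simp
    then show ?thesis using Dh x y D0 f0 by auto
  next
    case False
    then have f1: "0 < nat \<lfloor>\<gamma>\<rfloor>" by linarith
    have D1: "\<forall>x\<in>{0..1}. \<bar>D 1 x\<bar> \<le> M" using Db f1 by (simp add: Suc_leI)
    have "norm (D 0 x - D 0 y) \<le> M * norm (x - y)"
      apply (rule field_differentiable_bound[where S="{0..1}" and f'="D 1"])
      using Dd f1 x y D1 by auto
    moreover have "min \<gamma> 1 = 1" using False by simp
    ultimately show ?thesis using D0 x y by auto
  qed
qed

lemma holder_cont:
  assumes g: "g \<in> holder \<gamma> M" and "\<gamma> > 0"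
  shows "continuous_on {0..1} g"
  unfolding continuous_on_def
proof (intro ballI)
  fix x :: real assume x: "x \<in> {0..1}"
  have "((\<lambda>y. g y - g x) \<longlongrightarrow> 0) (at x within {0..1})"
  proof (rule Lim_null_comparison)
    show "\<forall>\<^sub>F y in at x within {0..1}. norm (g y - g x) \<le> M * \<bar>y - x\<bar> powr min \<gamma> 1"
      using holder_bound[OF g assms(2) _ x] by (auto simp: eventually_at_filter)
    have "((\<lambda>y. \<bar>y - x\<bar> powr min \<gamma> 1) \<longlongrightarrow> 0) (at x within {0..1})"
      apply (rule tendsto_zero_powrI[where b="min \<gamma> 1"])
      using assms(2) by (auto intro!: tendsto_eq_intros)
    then show "((\<lambda>y. M * \<bar>y - x\<bar> powr min \<gamma> 1) \<longlongrightarrow> 0) (at x within {0..1})"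
      using tendsto_mult_right_zero by blast
  qed
  then show "(g \<longlongrightarrow> g x) (at x within {0..1})"
    by (rule LIM_zero_cancel)
qed

lemma integral_split:
  fixes g :: "real \<Rightarrow> real"
  assumes "continuous_on {0..1} g" and "n \<ge> 1"
  shows "integral {0..1} g = (\<Sum>i<n. integral {real i / n..real (Suc i) / n} g)"
proof -
  have "k \<le> n \<Longrightarrow> integral {0..real k / n} g = (\<Sum>i<k. integral {real i / n..real (Suc i) / n} g)" for k
  proof (induction k)
    case 0 then show ?case by simp
  next
    case (Suc k)
    have int: "g integrable_on {0..real (Suc k) / n}"
      apply (rule integrable_continuous_interval)
      apply (rule continuous_on_subset[OF assms(1)])
      using Suc.prems by (auto simp: field_simps)
    have "integral {0..real (Suc k) / n} g = integral {0..real k / n} g + integral {real k / n..real (Suc k) / n} g"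
      using Henstock_Kurzweil_Integration.integral_combine[where a=0 and c="real k / n" and b="real (Suc k) / n" and f=g] int by (simp add: divide_right_mono)
    then show ?case using Suc by simp
  qed
  from this[of n] assms(2) show ?thesis by simp
qed

lemma variance_le:
  fixes V :: "real \<Rightarrow> real"
  assumes "continuous_on {0..1} V"
  shows "integral {0..1} (\<lambda>x. (V x - integral {0..1} V)\<^sup>2) \<le> integral {0..1} (\<lambda>x. (V x - c)\<^sup>2)"
proof -
  define m where "m = integral {0..1} V"
  have iV: "V integrable_on {0..1}" using assms integrable_continuous_interval by blast
  have c1: "continuous_on {0..1} (\<lambda>x. (V x - c)\<^sup>2)" using assms by (auto intro!: continuous_intros)
  have i1: "(\<lambda>x. (V x - c)\<^sup>2) integrable_on {0..1}" using c1 integrable_continuous_interval by blast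
  have i2: "(\<lambda>x. V x - c) integrable_on {0..1}" using iV by (intro integrable_diff) auto
  have e2: "integral {0..1} (\<lambda>x. V x - c) = m - c"
  proof -
    have "integral {0..1} (\<lambda>x. V x - c) = integral {0..1} V - integral {0..1} (\<lambda>x::real. c)"
      using Henstock_Kurzweil_Integration.integral_diff[OF iV integrable_const_ivl] by simp
    then show ?thesis by (simp add: m_def)
  qed
  have eq: "(\<lambda>x. (V x - m)\<^sup>2) = (\<lambda>x. ((V x - c)\<^sup>2 - (2 * (m - c)) * (V x - c)) + (m - c)\<^sup>2)"
    by (auto simp: power2_eq_square algebra_simps)
  have "integral {0..1} (\<lambda>x. (V x - m)\<^sup>2) = integral {0..1} (\<lambda>x. (V x - c)\<^sup>2) - (2 * (m - c)) * (m - c) + (m - c)\<^sup>2"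
  proof -
    have i3: "(\<lambda>x. (2 * (m - c)) * (V x - c)) integrable_on {0..1}"
      using integrable_cmul[OF i2, of "2 * (m - c)"] by simp
    have i4: "(\<lambda>x. (V x - c)\<^sup>2 - (2 * (m - c)) * (V x - c)) integrable_on {0..1}"
      using i1 i3 by (rule integrable_diff)
    have "integral {0..1} (\<lambda>x. ((V x - c)\<^sup>2 - (2 * (m - c)) * (V x - c)) + (m - c)\<^sup>2)
        = integral {0..1} (\<lambda>x. (V x - c)\<^sup>2 - (2 * (m - c)) * (V x - c)) + integral {0..1} (\<lambda>x::real. (m - c)\<^sup>2)"
      by (rule Henstock_Kurzweil_Integration.integral_add[OF i4 integrable_const_ivl])
    also have "integral {0..1} (\<lambda>x. (V x - c)\<^sup>2 - (2 * (m - c)) * (V x - c))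
        = integral {0..1} (\<lambda>x. (V x - c)\<^sup>2) - integral {0..1} (\<lambda>x. (2 * (m - c)) * (V x - c))"
      by (rule Henstock_Kurzweil_Integration.integral_diff[OF i1 i3])
    also have "integral {0..1} (\<lambda>x. (2 * (m - c)) * (V x - c)) = (2 * (m - c)) * (m - c)"
      using e2 by simp
    finally show ?thesis unfolding eq by simp
  qed
  also have "\<dots> \<le> integral {0..1} (\<lambda>x. (V x - c)\<^sup>2)"
  proof -
    have "0 \<le> (m - c) * (m - c)" by simp
    then show ?thesis by (simp add: power2_eq_square algebra_simps)
  qed
  finally show ?thesis unfolding m_def .
qed


lemma pow_bound:
  fixes n :: nat and b x y :: real
  assumes "n \<ge> 1" "0 < b" "b \<le> 1" "\<bar>x - y\<bar> \<le> 1 / real n"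
  shows "\<bar>x - y\<bar> powr b \<le> real n powr (- b)"
proof -
  have "\<bar>x - y\<bar> powr b \<le> (1 / real n) powr b"
    by (rule powr_mono2) (use assms in auto)
  also have "\<dots> = real n powr (- b)"
    using assms(1) by (simp add: powr_divide powr_minus_divide)
  finally show ?thesis .
qed

lemma sq_powr: "n \<ge> (1::nat) \<Longrightarrow> (real n powr a)\<^sup>2 = real n powr (2 * a)"
  by (simp add: power2_eq_square powr_add[symmetric])

lemma aux:
  fixes p q r s E S :: real
  assumes "\<bar>p - q\<bar> \<le> E" "\<bar>p - r\<bar> \<le> E" "0 \<le> s" "s \<le> S"
  shows "\<bar>p - (q + r) / 2 - s / 2\<bar> \<le> E + S / 2"
proof -
  have "p - q \<le> E" "q - p \<le> E" "p - r \<le> E" "r - p \<le> E" using assms(1,2) by auto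
  then show ?thesis using assms(3,4) by (simp add: abs_le_iff field_simps)
qed

lemma main_bound:
  fixes n :: nat and f V :: "real \<Rightarrow> real" and \<alpha> \<beta> M :: real
  assumes n: "n \<ge> 1" and f: "f \<in> holder \<alpha> M" and V: "V \<in> holder \<beta> M"
    and "\<alpha> > 0" "\<beta> > 0" "M > 0"
    and x: "x \<in> {real i / n..real (Suc i) / n}" and i: "i < n"
  shows "(V x - ((\<Sum>i<n. V (real i / real n) + V (real (Suc i) / real n)) / real n
          + (\<Sum>i<n. (f (real (Suc i) / real n) - f (real i / real n))\<^sup>2) / real n) / 2)\<^sup>2
     \<le> 4 * M\<^sup>2 * real n powr (- 2 * min \<beta> 1) + M ^ 4 * real n powr (- 4 * min \<alpha> 1)
       + ((V (real i / real n) + V (real (Suc i) / real n)) + (f (real (Suc i) / real n) - f (real i / real n))\<^sup>2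
          - (\<Sum>i<n. V (real i / real n) + V (real (Suc i) / real n)) / real n
          - (\<Sum>i<n. (f (real (Suc i) / real n) - f (real i / real n))\<^sup>2) / real n)\<^sup>2 / 2"
proof -
  define a where "a = min \<alpha> 1"
  define b where "b = min \<beta> 1"
  define e where "e = real n powr (- b)"
  define d where "d = real n powr (- a)"
  have npos: "real n > 0" using n by simp
  have e0: "e \<ge> 0" "d \<ge> 0" unfolding e_def d_def by auto
  have p0: "real i / n \<in> {0..1}" "real (Suc i) / n \<in> {0..1}" using i npos by (auto simp: field_simps)
  have z: "0 \<le> real i / n" using npos by simp
  have xx: "real i / n \<le> x" "x \<le> real (Suc i) / n" using x by auto
  have o: "real (Suc i) / n \<le> 1" using p0 by auto
  have x01: "x \<in> {0..1}" using z xx o unfolding atLeastAtMost_iff by linarith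
  have w: "real (Suc i) / n - real i / n = 1 / n" by (simp add: diff_divide_distrib[symmetric])
  have dd1: "\<bar>x - real i / n\<bar> \<le> 1 / n" using xx w unfolding abs_le_iff by linarith
  have dd2: "\<bar>x - real (Suc i) / n\<bar> \<le> 1 / n" using xx w unfolding abs_le_iff by linarith
  have dd3: "\<bar>real (Suc i) / n - real i / n\<bar> \<le> 1 / n" using w by simp
  have h1: "\<bar>V x - V (real i / n)\<bar> \<le> M * e"
  proof -
    have "\<bar>V x - V (real i / n)\<bar> \<le> M * \<bar>x - real i / n\<bar> powr b"
      unfolding b_def by (rule holder_bound[OF V \<open>\<beta> > 0\<close> x01 p0(1)])
    also have "\<dots> \<le> M * e" unfolding e_def
      apply (rule mult_left_mono[OF pow_bound])
      using n \<open>\<beta> > 0\<close> \<open>M > 0\<close> dd1 by (auto simp: b_def)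
    finally show ?thesis .
  qed
  have h2: "\<bar>V x - V (real (Suc i) / n)\<bar> \<le> M * e"
  proof -
    have "\<bar>V x - V (real (Suc i) / n)\<bar> \<le> M * \<bar>x - real (Suc i) / n\<bar> powr b"
      unfolding b_def by (rule holder_bound[OF V \<open>\<beta> > 0\<close> x01 p0(2)])
    also have "\<dots> \<le> M * e" unfolding e_def
      apply (rule mult_left_mono[OF pow_bound])
      using n \<open>\<beta> > 0\<close> \<open>M > 0\<close> dd2 by (auto simp: b_def)
    finally show ?thesis .
  qed
  have h3: "\<bar>f (real (Suc i) / n) - f (real i / n)\<bar> \<le> M * d"
  proof -
    have "\<bar>f (real (Suc i) / n) - f (real i / n)\<bar> \<le> M * \<bar>real (Suc i) / n - real i / n\<bar> powr a"
      unfolding a_def by (rule holder_bound[OF f \<open>\<alpha> > 0\<close> p0(2) p0(1)])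
    also have "\<dots> \<le> M * d" unfolding d_def
      apply (rule mult_left_mono[OF pow_bound])
      using n \<open>\<alpha> > 0\<close> \<open>M > 0\<close> dd3 by (auto simp: a_def)
    finally show ?thesis .
  qed
  define Q where "Q = ((V (real i / real n) + V (real (Suc i) / real n)) + (f (real (Suc i) / real n) - f (real i / real n))\<^sup>2
          - (\<Sum>i<n. V (real i / real n) + V (real (Suc i) / real n)) / real n
          - (\<Sum>i<n. (f (real (Suc i) / real n) - f (real i / real n))\<^sup>2) / real n)"
  define A where "A = (V x - (V (real i / real n) + V (real (Suc i) / real n)) / 2) - (f (real (Suc i) / real n) - f (real i / real n))\<^sup>2 / 2"
  have eqA: "V x - ((\<Sum>i<n. V (real i / real n) + V (real (Suc i) / real n)) / real n
          + (\<Sum>i<n. (f (real (Suc i) / real n) - f (real i / real n))\<^sup>2) / real n) / 2 = A + Q / 2"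
    unfolding A_def Q_def by (simp add: field_simps)
  have dsq: "(f (real (Suc i) / real n) - f (real i / real n))\<^sup>2 \<le> (M * d)\<^sup>2"
    using h3 by (metis abs_ge_zero power2_abs power_mono)
  have absA: "\<bar>A\<bar> \<le> M * e + (M * d)\<^sup>2 / 2"
    unfolding A_def by (rule aux[OF h1 h2 _ dsq]) simp
  have A2: "A\<^sup>2 \<le> (M * e + (M * d)\<^sup>2 / 2)\<^sup>2"
    using absA by (metis abs_ge_zero power2_abs power_mono)
  have sq: "(u + v)\<^sup>2 \<le> 2 * u\<^sup>2 + 2 * v\<^sup>2" for u v :: real
    using sum_squares_ge_zero[of "u - v" 0] by (simp add: power2_eq_square algebra_simps)
  have "(A + Q / 2)\<^sup>2 \<le> 2 * A\<^sup>2 + Q\<^sup>2 / 2"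
    using sq[of A "Q/2"] by (simp add: power2_eq_square)
  also have "\<dots> \<le> 2 * (M * e + (M * d)\<^sup>2 / 2)\<^sup>2 + Q\<^sup>2 / 2" using A2 by simp
  also have "2 * (M * e + (M * d)\<^sup>2 / 2)\<^sup>2 \<le> 4 * M\<^sup>2 * e\<^sup>2 + M ^ 4 * (d\<^sup>2)\<^sup>2"
    using sq[of "M * e" "(M * d)\<^sup>2 / 2"] by (simp add: power2_eq_square power4_eq_xxxx algebra_simps)
  also have "e\<^sup>2 = real n powr (- 2 * min \<beta> 1)" unfolding e_def b_def using sq_powr[OF n] by simp
  also have "(d\<^sup>2)\<^sup>2 = real n powr (- 4 * min \<alpha> 1)" unfolding d_def a_def using sq_powr[OF n]
    by (simp add: mult.assoc)
  finally show ?thesis unfolding eqA Q_def by simp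
qed


theorem proposition2p1:
  fixes \<alpha> \<beta> M :: real
  assumes "\<alpha> > 0" and "\<beta> > 0" and "M > 0"
  shows "\<exists>C > 0. \<forall>(n::nat) (f::real \<Rightarrow> real) (V::real \<Rightarrow> real).
    n \<ge> 1 \<longrightarrow> f \<in> holder \<alpha> M \<longrightarrow> V \<in> holder \<beta> M \<longrightarrow>
    (let W = (\<lambda>i::nat. V (real i / real n) + V (real (Suc i) / real n));
         \<delta> = (\<lambda>i::nat. f (real (Suc i) / real n) - f (real i / real n));
         Wbar = (\<Sum>i<n. W i) / real n;
         d2bar = (\<Sum>i<n. (\<delta> i)\<^sup>2) / real n;
         T = (\<Sum>i<n. (W i + (\<delta> i)\<^sup>2 - Wbar - d2bar)\<^sup>2) / real n;
         Vbar = integral {0..1} V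
     in integral {0..1} (\<lambda>x. (V x - Vbar)\<^sup>2)
        \<le> C * (T + real n powr (- 2 * min \<beta> 1) + real n powr (- 4 * min \<alpha> 1)))"
proof (intro exI[of _ "4 * M\<^sup>2 + M ^ 4 + 1"] conjI allI impI)
  show "0 < 4 * M\<^sup>2 + M ^ 4 + 1" by (simp add: add_nonneg_pos)
next
  fix n :: nat and f V :: "real \<Rightarrow> real"
  assume n: "n \<ge> 1" and f: "f \<in> holder \<alpha> M" and V: "V \<in> holder \<beta> M"
  define Wb where "Wb = (\<Sum>i<n. V (real i / real n) + V (real (Suc i) / real n)) / real n"
  define db where "db = (\<Sum>i<n. (f (real (Suc i) / real n) - f (real i / real n))\<^sup>2) / real n"
  define Q where "Q = (\<lambda>i. (V (real i / real n) + V (real (Suc i) / real n)) + (f (real (Suc i) / real n) - f (real i / real n))\<^sup>2 - Wb - db)"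
  define T where "T = (\<Sum>i<n. (Q i)\<^sup>2) / real n"
  define e2 where "e2 = real n powr (- 2 * min \<beta> 1)"
  define d4 where "d4 = real n powr (- 4 * min \<alpha> 1)"
  define B where "B = 4 * M\<^sup>2 * e2 + M ^ 4 * d4"
  define c where "c = (Wb + db) / 2"
  have npos: "real n > 0" using n by simp
  have cont: "continuous_on {0..1} V" by (rule holder_cont[OF V \<open>\<beta> > 0\<close>])
  have cont2: "continuous_on {0..1} (\<lambda>x. (V x - c)\<^sup>2)" using cont by (auto intro!: continuous_intros)
  have pw: "(V x - c)\<^sup>2 \<le> B + (Q i)\<^sup>2 / 2" if "i < n" "x \<in> {real i / n..real (Suc i) / n}" for i x
    using main_bound[OF n f V \<open>\<alpha> > 0\<close> \<open>\<beta> > 0\<close> \<open>M > 0\<close> that(2) that(1)]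
    unfolding B_def Q_def c_def Wb_def db_def e2_def d4_def by simp
  have step: "integral {real i / n..real (Suc i) / n} (\<lambda>x. (V x - c)\<^sup>2) \<le> (B + (Q i)\<^sup>2 / 2) / n" if "i < n" for i
  proof -
    have sub: "{real i / n..real (Suc i) / n} \<subseteq> {0..1}" using that npos by (auto simp: field_simps)
    have "integral {real i / n..real (Suc i) / n} (\<lambda>x. (V x - c)\<^sup>2) \<le> integral {real i / n..real (Suc i) / n} (\<lambda>x. B + (Q i)\<^sup>2 / 2)"
      apply (rule integral_le)
      using integrable_continuous_interval[OF continuous_on_subset[OF cont2 sub]] apply simp
      apply (rule integrable_const_ivl)
      using pw[OF that] by simp
    also have "\<dots> = (real (Suc i) / n - real i / n) * (B + (Q i)\<^sup>2 / 2)"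
      using npos by (simp add: divide_right_mono)
    also have "\<dots> = (B + (Q i)\<^sup>2 / 2) / n" by (simp add: diff_divide_distrib[symmetric])
    finally show ?thesis .
  qed
  have "integral {0..1} (\<lambda>x. (V x - integral {0..1} V)\<^sup>2) \<le> integral {0..1} (\<lambda>x. (V x - c)\<^sup>2)"
    by (rule variance_le[OF cont])
  also have "\<dots> = (\<Sum>i<n. integral {real i / n..real (Suc i) / n} (\<lambda>x. (V x - c)\<^sup>2))"
    by (rule integral_split[OF cont2 n])
  also have "\<dots> \<le> (\<Sum>i<n. (B + (Q i)\<^sup>2 / 2) / n)"
    by (rule sum_mono) (use step in auto)
  also have "\<dots> = B + T / 2"
    using npos unfolding T_def by (simp add: sum_divide_distrib[symmetric] sum.distrib sum_distrib_left[symmetric] field_simps)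
  also have "\<dots> \<le> (4 * M\<^sup>2 + M ^ 4 + 1) * (T + e2 + d4)"
  proof -
    have "T \<ge> 0" unfolding T_def by (simp add: sum_nonneg)
    moreover have "e2 \<ge> 0" "d4 \<ge> 0" unfolding e2_def d4_def by auto
    moreover have "M\<^sup>2 \<ge> 0" "M ^ 4 \<ge> 0" by auto
    ultimately show ?thesis unfolding B_def by (simp add: algebra_simps add_nonneg_nonneg mult_nonneg_nonneg)
  qed
  finally show "let W = (\<lambda>i::nat. V (real i / real n) + V (real (Suc i) / real n));
         \<delta> = (\<lambda>i::nat. f (real (Suc i) / real n) - f (real i / real n));
         Wbar = (\<Sum>i<n. W i) / real n;
         d2bar = (\<Sum>i<n. (\<delta> i)\<^sup>2) / real n;
         T = (\<Sum>i<n. (W i + (\<delta> i)\<^sup>2 - Wbar - d2bar)\<^sup>2) / real n;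
         Vbar = integral {0..1} V
     in integral {0..1} (\<lambda>x. (V x - Vbar)\<^sup>2)
        \<le> (4 * M\<^sup>2 + M ^ 4 + 1) * (T + real n powr (- 2 * min \<beta> 1) + real n powr (- 4 * min \<alpha> 1))"
    unfolding Let_def T_def Q_def Wb_def db_def e2_def d4_def .
qed

end
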